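(* Let $\mathcal S=\{(k_{tj},C_{tj})\in\mathbb R_+^2: t\in\{1,\dots,n\},\ j\in\{1,\dots,U(t)\}\}$. There exists a nonnegative martingale $X_1,\dots,X_n$ (with each $X_t$ integrable) such that $E[(X_t-k_{tj})^+]=C_{tj}$ for all $(k_{tj},C_{tj})\in\mathcal S$ if and only if there exists a sequence of convex functions $g_1,\dots,g_n:\mathbb R_+\to\mathbb R_+$ which is nondecreasing (i.e. $g_1(x)\le g_2(x)\le\dots\le g_n(x)$ for all $x\ge0$) such that for each $t\in\{1,\dots,n\}$: (a) $g_t(0)=g_1(0)$; (b) $g_t(x)\ge g_t(0)-x$ for all $x\ge0$; (c) $g_t(x)\to0$ as $x\to\infty$; (d) $g_t(k_{tj})=C_{tj}$ for each $j\in\{1,\dots,U(t)\}$. *)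

theory Defs
  imports "HOL-Probability.Probability"
begin

definition natural_filtration :: "'a measure \<Rightarrow> (nat \<Rightarrow> 'a \<Rightarrow> real) \<Rightarrow> nat \<Rightarrow> 'a measure" where
  "natural_filtration M X t =
     sigma (space M) (\<Union>s\<in>{1..t}. {X s -` B \<inter> space M | B. B \<in> sets borel})"

definition finite_martingale :: "'a measure \<Rightarrow> (nat \<Rightarrow> 'a \<Rightarrow> real) \<Rightarrow> nat \<Rightarrow> bool" where
  "finite_martingale M X n \<longleftrightarrow>
     prob_space M \<and>
     (\<forall>t\<in>{1..n}. X t \<in> borel_measurable M \<and> integrable M (X t)) \<and>
     (\<forall>t\<in>{1..<n}. AE \<omega> in M.
        real_cond_exp M (natural_filtration M X t) (X (Suc t)) \<omega> = X t \<omega>)"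

end

theory Submission
  imports Defs
begin

definition cf :: "real pmf \<Rightarrow> real \<Rightarrow> real" where
  "cf \<mu> x = measure_pmf.expectation \<mu> (\<lambda>y. max (y - x) 0)"

definition okm :: "real pmf \<Rightarrow> real \<Rightarrow> bool" where
  "okm \<mu> m \<longleftrightarrow> finite (set_pmf \<mu>) \<and> set_pmf \<mu> \<subseteq> {0..} \<and> measure_pmf.expectation \<mu> (\<lambda>y. y) = m"

definition goodK :: "(real \<Rightarrow> real pmf) \<Rightarrow> bool" where
  "goodK K \<longleftrightarrow> (\<forall>x\<ge>0. okm (K x) x)"

lemma exp_bind:
  fixes h :: "'b \<Rightarrow> real"
  assumes "finite (set_pmf p)" "\<And>x. x \<in> set_pmf p \<Longrightarrow> finite (set_pmf (K x))"
  shows "measure_pmf.expectation (p \<bind> K) h = measure_pmf.expectation p (\<lambda>x. measure_pmf.expectation (K x) h)"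
  apply (subst pmf_expectation_bind[of "set_pmf p"])
  using assms apply auto[3]
  apply (subst integral_measure_pmf_real[of "set_pmf p"])
  using assms by (auto simp: mult.commute)

lemma okm_bind: assumes "okm \<mu> m" "goodK K" shows "okm (\<mu> \<bind> K) m"
proof -
  have f: "finite (set_pmf \<mu>)" and s: "set_pmf \<mu> \<subseteq> {0..}" and e: "measure_pmf.expectation \<mu> (\<lambda>y. y) = m"
    using assms(1) by (auto simp: okm_def)
  have k: "\<And>x. x \<in> set_pmf \<mu> \<Longrightarrow> okm (K x) x" using assms(2) s by (auto simp: goodK_def)
  have "measure_pmf.expectation (\<mu> \<bind> K) (\<lambda>y. y) = measure_pmf.expectation \<mu> (\<lambda>x. measure_pmf.expectation (K x) (\<lambda>y. y))"
    by (rule exp_bind) (use f k in \<open>auto simp: okm_def\<close>)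
  also have "\<dots> = measure_pmf.expectation \<mu> (\<lambda>y. y)"
    by (rule integral_cong_AE) (use k in \<open>auto simp: okm_def AE_measure_pmf_iff\<close>)
  finally show ?thesis using f s k e by (auto simp: okm_def)
qed

lemma goodK_return: "goodK return_pmf" by (auto simp: goodK_def okm_def)

lemma goodK_comp: assumes "goodK K1" "goodK K2" shows "goodK (\<lambda>x. K1 x \<bind> K2)"
  using assms okm_bind unfolding goodK_def by blast

lemma cf_sum: assumes "finite (set_pmf \<mu>)"
  shows "cf \<mu> x = (\<Sum>y\<in>set_pmf \<mu>. max (y - x) 0 * pmf \<mu> y)"
  unfolding cf_def by (rule integral_measure_pmf_real) (use assms in auto)

lemma cf_cont: assumes "finite (set_pmf \<mu>)" shows "continuous_on UNIV (cf \<mu>)"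
proof -
  have "cf \<mu> = (\<lambda>x. \<Sum>y\<in>set_pmf \<mu>. max (y - x) 0 * pmf \<mu> y)" using cf_sum[OF assms] by auto
  moreover have "continuous_on UNIV (\<lambda>x. \<Sum>y\<in>set_pmf \<mu>. max (y - x) 0 * pmf \<mu> y)"
    by (intro continuous_intros)
  ultimately show ?thesis by simp
qed

lemma cf_nonneg: "cf \<mu> x \<ge> 0" unfolding cf_def by (rule integral_nonneg_AE) auto

lemma cf_neg: assumes "okm \<mu> m" "x \<le> 0" shows "cf \<mu> x = m - x"
proof -
  have "cf \<mu> x = measure_pmf.expectation \<mu> (\<lambda>y. y - x)"
    unfolding cf_def by (rule integral_cong_AE) (use assms in \<open>auto simp: okm_def AE_measure_pmf_iff\<close>)
  also have "\<dots> = m - x" using assms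
    by (subst Bochner_Integration.integral_diff) (auto simp: okm_def integrable_measure_pmf_finite)
  finally show ?thesis .
qed

lemma cf_convex: assumes "finite (set_pmf \<mu>)" "a \<le> x" "x \<le> b" "a < b"
  shows "cf \<mu> x \<le> (b - x) / (b - a) * cf \<mu> a + (x - a) / (b - a) * cf \<mu> b"
proof -
  have pt: "max (y - x) 0 \<le> (b - x) / (b - a) * max (y - a) 0 + (x - a) / (b - a) * max (y - b) 0" for y
  proof -
    have ba: "b - a > 0" using assms by auto
    have "(b - a) * max (y - x) 0 \<le> (b - x) * max (y - a) 0 + (x - a) * max (y - b) 0"
    proof (cases "y \<le> x")
      case True
      then have "(b - x) * max (y - a) 0 \<ge> 0" "(x - a) * max (y - b) 0 \<ge> 0" using assms by auto
      then show ?thesis using True by simp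
    next
      case False
      show ?thesis
      proof (cases "y \<le> b")
        case True
        have "(b - x) * max (y - a) 0 + (x - a) * max (y - b) 0 - (b - a) * max (y - x) 0 = (b - y) * (x - a)"
          using True False assms by (simp add: max_def algebra_simps)
        moreover have "(b - y) * (x - a) \<ge> 0" using True assms by simp
        ultimately show ?thesis by linarith
      next
        case c2: False
        have "(b - x) * max (y - a) 0 + (x - a) * max (y - b) 0 - (b - a) * max (y - x) 0 = 0"
          using c2 False assms by (simp add: max_def algebra_simps)
        then show ?thesis by linarith
      qed
    qed
    moreover have "(b - x) / (b - a) * P + (x - a) / (b - a) * Q = ((b - x) * P + (x - a) * Q) / (b - a)" for P Q
      by (simp add: add_divide_distrib)
    ultimately show ?thesis using ba by (metis pos_le_divide_eq mult.commute)
  qed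
  have "cf \<mu> x \<le> measure_pmf.expectation \<mu> (\<lambda>y. (b - x) / (b - a) * max (y - a) 0 + (x - a) / (b - a) * max (y - b) 0)"
    unfolding cf_def by (rule integral_mono) (use assms pt in \<open>auto simp: integrable_measure_pmf_finite\<close>)
  also have "\<dots> = (b - x) / (b - a) * cf \<mu> a + (x - a) / (b - a) * cf \<mu> b"
    unfolding cf_def using assms by (simp add: integrable_measure_pmf_finite)
  finally show ?thesis .
qed

definition bal :: "real \<Rightarrow> real \<Rightarrow> real \<Rightarrow> real pmf" where
  "bal a b y = (if a < y \<and> y < b then map_pmf (\<lambda>c. if c then b else a) (bernoulli_pmf ((y - a) / (b - a))) else return_pmf y)"

lemma frac_aux: assumes "b - a \<noteq> (0::real)" shows "(b - a) * ((y - a) / (b - a)) = y - a"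
  using assms by (metis nonzero_mult_div_cancel_left times_divide_eq_right)
lemma lin1: assumes "(b - a) * p = y - (a::real)" shows "b * p + a * (1 - p) = y"
proof -
  have "b*p - a*p = y - a" using assms by (simp add: left_diff_distrib)
  then show ?thesis by (simp add: right_diff_distrib)
qed
lemma lin2: assumes "(b - a) * p = y - (a::real)" shows "(b - x) * p + (a - x) * (1 - p) = y - x"
proof -
  have "b*p - a*p = y - a" using assms by (simp add: left_diff_distrib)
  then show ?thesis by (simp add: right_diff_distrib left_diff_distrib)
qed

lemma bal_exp:
  fixes h :: "real \<Rightarrow> real"
  assumes "a < b"
  shows "measure_pmf.expectation (bal a b y) h =
    (if a < y \<and> y < b then h b * ((y - a) / (b - a)) + h a * (1 - (y - a) / (b - a)) else h y)"
proof (cases "a < y \<and> y < b")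
  case True
  define p where "p = (y - a) / (b - a)"
  have p0: "0 \<le> p" "p \<le> 1" using True assms by (auto simp: p_def)
  have "bal a b y = map_pmf (\<lambda>c. if c then b else a) (bernoulli_pmf p)"
    using True by (simp add: bal_def p_def)
  then have "measure_pmf.expectation (bal a b y) h = measure_pmf.expectation (bernoulli_pmf p) (\<lambda>c. h (if c then b else a))"
    by simp
  also have "\<dots> = h b * p + h a * (1 - p)"
    by (subst integral_bernoulli_pmf[OF p0]) simp
  finally have E: "measure_pmf.expectation (bal a b y) h = h b * p + h a * (1 - p)" .
  show ?thesis unfolding if_P[OF True] using E by (simp only: p_def)
next
  case False
  then show ?thesis by (auto simp: bal_def)
qed

lemma bal_exp_in:
  fixes h :: "real \<Rightarrow> real"
  assumes "a < y" "y < b"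
  shows "measure_pmf.expectation (bal a b y) h = h b * ((y - a) / (b - a)) + h a * (1 - (y - a) / (b - a))"
proof -
  have ab: "a < b" using assms by simp
  have c: "a < y \<and> y < b" using assms by simp
  show ?thesis using bal_exp[where h=h and y=y, OF ab] unfolding if_P[OF c] .
qed

lemma bal_exp_out:
  fixes h :: "real \<Rightarrow> real"
  assumes "a < b" "\<not> (a < y \<and> y < b)"
  shows "measure_pmf.expectation (bal a b y) h = h y"
  using assms by (auto simp: bal_def)

lemma bal_set: "set_pmf (bal a b y) \<subseteq> {a, b, y}"
proof (cases "a < y \<and> y < b")
  case True
  have g: "(\<lambda>c. if c then b else a) ` X \<subseteq> {a, b, y}" for X by auto
  show ?thesis unfolding bal_def if_P[OF True] set_map_pmf by (rule g)
next
  case False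
  show ?thesis unfolding bal_def if_not_P[OF False] by simp
qed

lemma bal_fin: "finite (set_pmf (bal a b y))"
  by (rule finite_subset[OF bal_set]) simp

lemma goodK_bal: assumes "0 \<le> a" "a < b" shows "goodK (bal a b)"
  unfolding goodK_def okm_def
proof (intro allI impI conjI)
  fix x :: real assume x: "0 \<le> x"
  show "finite (set_pmf (bal a b x))" by (rule bal_fin)
  show "set_pmf (bal a b x) \<subseteq> {0..}" using bal_set[of a b x] assms x by auto
  show "measure_pmf.expectation (bal a b x) (\<lambda>y. y) = x"
  proof (cases "a < x \<and> x < b")
    case True
    have "b - a \<noteq> 0" using assms by simp
    have "measure_pmf.expectation (bal a b x) (\<lambda>y. y) = b * ((x - a) / (b - a)) + a * (1 - (x - a) / (b - a))"
      using True by (intro bal_exp_in) auto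
    also have "\<dots> = x" by (rule lin1[OF frac_aux[OF \<open>b - a \<noteq> 0\<close>, of x]])
    finally show ?thesis .
  next
    case False
    show ?thesis by (rule bal_exp_out[OF assms(2) False])
  qed
qed

lemma bal_pt_out:
  assumes ab: "a < b" and xo: "x \<le> a \<or> b \<le> x"
  shows "measure_pmf.expectation (bal a b y) (\<lambda>z. max (z - x) 0) = max (y - x) 0"
proof (cases "a < y \<and> y < b")
  case True
  have ba: "b - a \<noteq> 0" using assms by simp
  define p where "p = (y - a) / (b - a)"
  have pe: "(b - a) * p = y - a" unfolding p_def by (rule frac_aux[OF ba])
  have E: "measure_pmf.expectation (bal a b y) (\<lambda>z. max (z - x) 0) = max (b - x) 0 * p + max (a - x) 0 * (1 - p)"
    unfolding p_def using bal_exp_in[of a y b] True by simp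
  show ?thesis
  proof (cases "x \<le> a")
    case c: True
    have m1: "max (b - x) 0 = b - x" "max (a - x) 0 = a - x" "max (y - x) 0 = y - x"
      using c True by auto
    show ?thesis unfolding E m1 by (rule lin2[OF pe])
  next
    case False
    then have "b \<le> x" using xo by simp
    then have m1: "max (b - x) 0 = 0" "max (a - x) 0 = 0" "max (y - x) 0 = 0"
      using True ab by auto
    show ?thesis unfolding E m1 by simp
  qed
next
  case False
  then show ?thesis by (rule bal_exp_out[OF ab])
qed

lemma bal_pt_in:
  assumes "a < x" "x < b"
  shows "measure_pmf.expectation (bal a b y) (\<lambda>z. max (z - x) 0) =
     (b - x) / (b - a) * max (y - a) 0 + (x - a) / (b - a) * max (y - b) 0"
proof -
  have ab: "a < b" using assms by simp
  have ba: "b - a \<noteq> 0" using assms by simp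
  show ?thesis
  proof (cases "a < y \<and> y < b")
    case True
    have E: "measure_pmf.expectation (bal a b y) (\<lambda>z. max (z - x) 0) = max (b - x) 0 * ((y - a) / (b - a)) + max (a - x) 0 * (1 - (y - a) / (b - a))"
      using bal_exp_in[of a y b] True by simp
    have m1: "max (b - x) 0 = b - x" "max (a - x) 0 = 0" "max (y - a) 0 = y - a" "max (y - b) 0 = 0"
      using True assms by auto
    show ?thesis unfolding E m1 by simp
  next
    case False
    have E: "measure_pmf.expectation (bal a b y) (\<lambda>z. max (z - x) 0) = max (y - x) 0"
      using bal_exp_out[OF ab False] .
    show ?thesis
    proof (cases "y \<le> a")
      case True
      have m1: "max (y - x) 0 = 0" "max (y - a) 0 = 0" "max (y - b) 0 = 0" using True assms by auto
      show ?thesis unfolding E m1 by simp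
    next
      case c: False
      then have yb: "b \<le> y" using False by auto
      have m1: "max (y - x) 0 = y - x" "max (y - a) 0 = y - a" "max (y - b) 0 = y - b" using yb assms by auto
      have e1: "(b - x) * (y - a) + (x - a) * (y - b) = (b - a) * (y - x)"
        by (simp add: algebra_simps)
      have "(b - x) / (b - a) * (y - a) + (x - a) / (b - a) * (y - b) = ((b - x) * (y - a) + (x - a) * (y - b)) / (b - a)"
        by (simp add: add_divide_distrib)
      also have "\<dots> = y - x" using ba by (simp only: e1) simp
      finally show ?thesis unfolding E m1 by simp
    qed
  qed
qed

lemma bal_cf:
  assumes fin: "finite (set_pmf \<mu>)" and ab: "a < b"
  shows "cf (\<mu> \<bind> bal a b) x = (if x \<le> a \<or> b \<le> x then cf \<mu> x
            else (b - x) / (b - a) * cf \<mu> a + (x - a) / (b - a) * cf \<mu> b)"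
proof -
  have "cf (\<mu> \<bind> bal a b) x = measure_pmf.expectation \<mu> (\<lambda>y. measure_pmf.expectation (bal a b y) (\<lambda>z. max (z - x) 0))"
    unfolding cf_def by (rule exp_bind) (use fin bal_fin in auto)
  also have "\<dots> = (if x \<le> a \<or> b \<le> x then cf \<mu> x
            else (b - x) / (b - a) * cf \<mu> a + (x - a) / (b - a) * cf \<mu> b)"
  proof (cases "x \<le> a \<or> b \<le> x")
    case True
    then show ?thesis unfolding cf_def using bal_pt_out[OF ab True] by simp
  next
    case False
    then have "a < x" "x < b" by auto
    then show ?thesis unfolding cf_def using False bal_pt_in[of a x b]
      by (simp add: integrable_measure_pmf_finite fin)
  qed
  finally show ?thesis .
qed

lemma cf_lip: assumes "finite (set_pmf \<mu>)" shows "cf \<mu> x \<le> cf \<mu> y + \<bar>x - y\<bar>"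
proof -
  have "cf \<mu> x \<le> measure_pmf.expectation \<mu> (\<lambda>z. max (z - y) 0 + \<bar>x - y\<bar>)"
    unfolding cf_def by (rule integral_mono) (auto simp: integrable_measure_pmf_finite assms)
  also have "\<dots> = cf \<mu> y + \<bar>x - y\<bar>"
    unfolding cf_def by (simp add: integrable_measure_pmf_finite assms)
  finally show ?thesis .
qed

lemma affine_interp:
  fixes a b x \<alpha> s :: real assumes "a < b"
  shows "(b - x) / (b - a) * (\<alpha> + s * a) + (x - a) / (b - a) * (\<alpha> + s * b) = \<alpha> + s * x"
proof -
  have e1: "(b - x) * (\<alpha> + s * a) + (x - a) * (\<alpha> + s * b) = (b - a) * (\<alpha> + s * x)"
    by (simp add: algebra_simps)
  have "(b - x) / (b - a) * (\<alpha> + s * a) + (x - a) / (b - a) * (\<alpha> + s * b)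
      = ((b - x) * (\<alpha> + s * a) + (x - a) * (\<alpha> + s * b)) / (b - a)"
    by (simp add: add_divide_distrib)
  also have "\<dots> = \<alpha> + s * x" using assms by (simp only: e1) simp
  finally show ?thesis .
qed

lemma step_lemma:
  assumes okm: "okm \<mu> m" and am: "\<alpha> \<le> m" and s1: "-1 \<le> s" and s0: "s \<le> 0" and sa: "s = 0 \<longrightarrow> \<alpha> \<le> 0"
  shows "\<exists>K. goodK K \<and> (\<forall>x. cf (\<mu> \<bind> K) x = max (cf \<mu> x) (\<alpha> + s * x))"
proof -
  define f where "f = cf \<mu>"
  have fin: "finite (set_pmf \<mu>)" using okm by (simp add: okm_def)
  have Lneg: "\<alpha> + s * x \<le> f x" if "x \<le> 0" for x
  proof -
    have "f x = m - x" using cf_neg[OF okm that] by (simp add: f_def)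
    moreover have "(s + 1) * x \<le> 0" using s1 that by (simp add: mult_nonneg_nonpos)
    moreover have "(s + 1) * x = s * x + x" by (simp add: distrib_right)
    ultimately show ?thesis using am by linarith
  qed
  have triv: "\<exists>K. goodK K \<and> (\<forall>x. cf (\<mu> \<bind> K) x = max (cf \<mu> x) (\<alpha> + s * x))"
    if "\<And>x. \<alpha> + s * x \<le> f x"
  proof -
    have "\<forall>x. cf (\<mu> \<bind> return_pmf) x = max (cf \<mu> x) (\<alpha> + s * x)"
    proof
      fix x
      have "\<alpha> + s * x \<le> cf \<mu> x" using that[of x] by (simp add: f_def)
      then show "cf (\<mu> \<bind> return_pmf) x = max (cf \<mu> x) (\<alpha> + s * x)"
        by (simp add: bind_return_pmf' max_def)
    qed
    then show ?thesis using goodK_return by blast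
  qed
  show ?thesis
  proof (cases "s = 0")
    case True
    show ?thesis
    proof (rule triv)
      fix x
      have "0 \<le> f x" by (simp add: f_def cf_nonneg)
      then show "\<alpha> + s * x \<le> f x" using True sa by simp
    qed
  next
    case False
    then have sn: "s < 0" using s0 by simp
    define S where "S = {x. 0 \<le> x \<and> f x \<le> \<alpha> + s * x}"
    show ?thesis
    proof (cases "S = {}")
      case True
      show ?thesis
      proof (rule triv)
        fix x show "\<alpha> + s * x \<le> f x"
        proof (cases "x \<le> 0")
          case True then show ?thesis using Lneg by simp
        next
          case False
          then have "x \<notin> S" using \<open>S = {}\<close> by simp
          then show ?thesis using False by (auto simp: S_def)
        qed
      qed
    next
      case Sne: False
      have bdd: "x \<le> \<alpha> / (- s)" if "x \<in> S" for x
      proof -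
        have "0 \<le> f x" by (simp add: f_def cf_nonneg)
        moreover have "f x \<le> \<alpha> + s * x" using that by (simp add: S_def)
        moreover have "x * (- s) = - (s * x)" by simp
        ultimately have "x * (- s) \<le> \<alpha>" by linarith
        moreover have "0 < - s" using sn by simp
        ultimately show ?thesis by (metis pos_le_divide_eq)
      qed
      have bddb: "bdd_below S" by (rule bdd_belowI[of _ 0]) (auto simp: S_def)
      have bdda: "bdd_above S" by (rule bdd_aboveI[of _ "\<alpha> / (- s)"]) (use bdd in auto)
      have cl: "closed S"
      proof -
        have "S = {x. 0 \<le> x} \<inter> {x. f x \<le> \<alpha> + s * x}" by (auto simp: S_def)
        moreover have "closed {x. f x \<le> \<alpha> + s * x}"
        proof (rule closed_Collect_le)
          show "continuous_on UNIV f" unfolding f_def by (rule cf_cont[OF fin])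
          show "continuous_on UNIV (\<lambda>x. \<alpha> + s * x)" by (intro continuous_intros)
        qed
        moreover have "closed {x::real. 0 \<le> x}"
          by (rule closed_Collect_le) (intro continuous_intros)+
        ultimately show ?thesis by auto
      qed
      define a where "a = Inf S"
      define b where "b = Sup S"
      have aS: "a \<in> S" unfolding a_def by (rule closed_contains_Inf[OF Sne bddb cl])
      have bS: "b \<in> S" unfolding b_def by (rule closed_contains_Sup[OF Sne bdda cl])
      have aless: "a \<le> x" if "x \<in> S" for x unfolding a_def by (rule cInf_lower[OF that bddb])
      have bgr: "x \<le> b" if "x \<in> S" for x unfolding b_def by (rule cSup_upper[OF that bdda])
      have a0: "0 \<le> a" using aS by (simp add: S_def)
      have ab: "a \<le> b" using aless[OF bS] .
      have Ea: "f a = \<alpha> + s * a"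
      proof (rule ccontr)
        assume ne: "f a \<noteq> \<alpha> + s * a"
        then have lt: "f a < \<alpha> + s * a" using aS by (simp add: S_def)
        show False
        proof (cases "a = 0")
          case True
          have "f 0 = m" using cf_neg[OF okm, of 0] by (simp add: f_def)
          then show False using lt True am by simp
        next
          case False
          define d where "d = \<alpha> + s * a - f a"
          define h where "h = min a (d / 4)"
          have d0: "d > 0" using lt by (simp add: d_def)
          have h0: "h > 0" using False a0 d0 by (simp add: h_def)
          have ha: "h \<le> a" "h \<le> d / 4" by (auto simp: h_def)
          have "f (a - h) \<le> f a + h" using cf_lip[OF fin, of "a - h" a] h0 unfolding f_def by simp
          moreover have "s * h \<le> 0" using sn h0 by (simp add: mult_nonpos_nonneg)
          moreover have "s * (a - h) = s * a - s * h" by (simp add: right_diff_distrib)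
          moreover have "h \<le> d" using ha(2) d0 by linarith
          moreover have "f a + d = \<alpha> + s * a" by (simp add: d_def)
          ultimately have "f (a - h) \<le> \<alpha> + s * (a - h)" by linarith
          then have "a - h \<in> S" using ha by (simp add: S_def)
          then show False using aless[of "a - h"] h0 by linarith
        qed
      qed
      have Eb: "f b = \<alpha> + s * b"
      proof (rule ccontr)
        assume ne: "f b \<noteq> \<alpha> + s * b"
        then have lt: "f b < \<alpha> + s * b" using bS by (simp add: S_def)
        define d where "d = \<alpha> + s * b - f b"
        define h where "h = d / 4"
        have d0: "d > 0" using lt by (simp add: d_def)
        have h0: "h > 0" using d0 by (simp add: h_def)
        have "f (b + h) \<le> f b + h" using cf_lip[OF fin, of "b + h" b] h0 unfolding f_def by simp
        moreover have "(s + 1) * h \<ge> 0" using s1 h0 by simp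
        moreover have "(s + 1) * h = s * h + h" by (simp add: distrib_right)
        moreover have "s * (b + h) = s * b + s * h" by (simp add: distrib_left)
        moreover have "2 * h \<le> d" using d0 by (simp add: h_def)
        moreover have "f b + d = \<alpha> + s * b" by (simp add: d_def)
        ultimately have "f (b + h) \<le> \<alpha> + s * (b + h)" by linarith
        moreover have "0 \<le> b + h" using a0 ab h0 by simp
        ultimately have "b + h \<in> S" by (simp add: S_def)
        then show False using bgr[of "b + h"] h0 by linarith
      qed
      have out: "\<alpha> + s * x \<le> f x" if "x \<le> a \<or> b \<le> x" for x
      proof (cases "x = a \<or> x = b")
        case True then show ?thesis using Ea Eb by auto
      next
        case False
        show ?thesis
        proof (cases "x \<le> 0")
          case True then show ?thesis using Lneg by simp
        next
          case x0: False
          have "x \<notin> S" using that False aless bgr by fastforce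
          then show ?thesis using x0 by (auto simp: S_def)
        qed
      qed
      show ?thesis
      proof (cases "a = b")
        case True
        show ?thesis
        proof (rule triv)
          fix x show "\<alpha> + s * x \<le> f x"
            using out[of x] True by linarith
        qed
      next
        case False
        then have ab': "a < b" using ab by simp
        have inside: "f x \<le> \<alpha> + s * x" if "a \<le> x" "x \<le> b" for x
        proof -
          have "f x \<le> (b - x) / (b - a) * f a + (x - a) / (b - a) * f b"
            unfolding f_def by (rule cf_convex[OF fin that ab'])
          also have "\<dots> = \<alpha> + s * x" using Ea Eb affine_interp[OF ab'] by simp
          finally show ?thesis .
        qed
        show ?thesis
        proof (intro exI[of _ "bal a b"] conjI allI)
          show "goodK (bal a b)" by (rule goodK_bal[OF a0 ab'])
          fix x
          show "cf (\<mu> \<bind> bal a b) x = max (cf \<mu> x) (\<alpha> + s * x)"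
          proof (cases "x \<le> a \<or> b \<le> x")
            case True
            then show ?thesis using bal_cf[OF fin ab', of x] out[OF True] by (simp add: f_def)
          next
            case c: False
            have "cf (\<mu> \<bind> bal a b) x = (b - x) / (b - a) * f a + (x - a) / (b - a) * f b"
              using bal_cf[OF fin ab', of x] c by (simp add: f_def)
            also have "\<dots> = \<alpha> + s * x" using Ea Eb affine_interp[OF ab'] by simp
            finally show ?thesis using inside[of x] c by (simp add: f_def)
          qed
        qed
      qed
    qed
  qed
qed

lemma multi_lemma:
  assumes fin: "finite \<Lambda>" and okm: "okm \<mu> m"
    and lines: "\<forall>(\<alpha>, s)\<in>\<Lambda>. \<alpha> \<le> m \<and> -1 \<le> s \<and> s \<le> 0 \<and> (s = 0 \<longrightarrow> \<alpha> \<le> 0)"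
  shows "\<exists>K. goodK K \<and> (\<forall>x. cf (\<mu> \<bind> K) x = Max (insert (cf \<mu> x) ((\<lambda>(\<alpha>, s). \<alpha> + s * x) ` \<Lambda>)))"
  using fin lines
proof (induction \<Lambda> rule: finite_induct)
  case empty
  show ?case using goodK_return by (intro exI[of _ return_pmf]) (auto simp: bind_return_pmf')
next
  case (insert p \<Lambda>)
  obtain \<alpha> s where p: "p = (\<alpha>, s)" by (cases p)
  from insert obtain K1 where K1: "goodK K1"
    and c1: "\<And>x. cf (\<mu> \<bind> K1) x = Max (insert (cf \<mu> x) ((\<lambda>(\<alpha>, s). \<alpha> + s * x) ` \<Lambda>))" by auto
  have okn: "okm (\<mu> \<bind> K1) m" by (rule okm_bind[OF okm K1])
  have ps: "\<alpha> \<le> m" "-1 \<le> s" "s \<le> 0" "s = 0 \<longrightarrow> \<alpha> \<le> 0" using insert.prems p by auto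
  obtain K2 where K2: "goodK K2" and c2: "\<And>x. cf ((\<mu> \<bind> K1) \<bind> K2) x = max (cf (\<mu> \<bind> K1) x) (\<alpha> + s * x)"
    using step_lemma[OF okn ps] by auto
  show ?case
  proof (intro exI[of _ "\<lambda>x. K1 x \<bind> K2"] conjI allI)
    show "goodK (\<lambda>x. K1 x \<bind> K2)" by (rule goodK_comp[OF K1 K2])
    fix x
    have "cf (\<mu> \<bind> (\<lambda>x. K1 x \<bind> K2)) x = cf ((\<mu> \<bind> K1) \<bind> K2) x" by (simp add: bind_assoc_pmf)
    also have "\<dots> = max (Max (insert (cf \<mu> x) ((\<lambda>(\<alpha>, s). \<alpha> + s * x) ` \<Lambda>))) (\<alpha> + s * x)"
      using c1 c2 by simp
    also have "\<dots> = Max (insert (\<alpha> + s * x) (insert (cf \<mu> x) ((\<lambda>(\<alpha>, s). \<alpha> + s * x) ` \<Lambda>)))"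
      using insert.hyps by (simp add: max.commute)
    also have "\<dots> = Max (insert (cf \<mu> x) ((\<lambda>(\<alpha>, s). \<alpha> + s * x) ` insert p \<Lambda>))"
      by (simp add: p insert_commute)
    finally show "cf (\<mu> \<bind> (\<lambda>x. K1 x \<bind> K2)) x = Max (insert (cf \<mu> x) ((\<lambda>(\<alpha>, s). \<alpha> + s * x) ` insert p \<Lambda>))" .
  qed
qed

lemma sl_swap: "((p::real) - q) / (r - u) = (q - p) / (u - r)"
  by (metis minus_diff_eq minus_divide_divide)

lemma chord_below:
  fixes g :: "real \<Rightarrow> real"
  assumes cv: "convex_on {0..} g" and a0: "0 \<le> a" and ab: "a < b" and x0: "0 \<le> x" and xo: "x \<le> a \<or> b \<le> x"
  shows "g a + (g b - g a) / (b - a) * (x - a) \<le> g x"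
proof -
  define s where "s = (g b - g a) / (b - a)"
  consider "x = a" | "x = b" | "x < a" | "b < x" using xo by linarith
  then show ?thesis
  proof cases
    case 1 then show ?thesis by simp
  next
    case 2 then show ?thesis using ab by simp
  next
    case 3
    have "(g x - g a) / (x - a) \<le> (g x - g b) / (x - b)"
      using convex_on_slope_le(1)[OF cv, of x b a] 3 ab a0 x0 by auto
    also have "\<dots> \<le> (g a - g b) / (a - b)"
      using convex_on_slope_le(2)[OF cv, of x b a] 3 ab a0 x0 by auto
    finally have "(g a - g x) / (a - x) \<le> s" unfolding s_def by (simp add: sl_swap)
    then have "g a - g x \<le> s * (a - x)" using 3 by (simp add: pos_divide_le_eq)
    then show ?thesis unfolding s_def[symmetric] by (simp add: algebra_simps)
  next
    case 4
    have "(g a - g b) / (a - b) \<le> (g a - g x) / (a - x)"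
      using convex_on_slope_le(1)[OF cv, of a x b] 4 ab a0 x0 by auto
    then have "s \<le> (g x - g a) / (x - a)" unfolding s_def by (simp add: sl_swap)
    then have "s * (x - a) \<le> g x - g a" using 4 ab by (simp add: pos_le_divide_eq)
    then show ?thesis unfolding s_def[symmetric] by (simp add: algebra_simps)
  qed
qed

lemma chord_props:
  fixes g :: "real \<Rightarrow> real"
  assumes cv: "convex_on {0..} g" and a0: "0 \<le> a" and ab: "a < b"
    and lb: "\<forall>x\<ge>0. g x \<ge> g 0 - x" and lim: "(g \<longlongrightarrow> 0) at_top"
  defines "s \<equiv> (g b - g a) / (b - a)"
  shows "g a - s * a \<le> g 0" "-1 \<le> s" "s \<le> 0" "s = 0 \<longrightarrow> g a - s * a \<le> 0"
proof -
  have cb: "g a + s * (x - a) \<le> g x" if "0 \<le> x" "x \<le> a \<or> b \<le> x" for x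
    using chord_below[OF cv a0 ab that] by (simp add: s_def mult.commute)
  show g0: "g a - s * a \<le> g 0" using cb[of 0] a0 by simp
  show "-1 \<le> s"
  proof (cases "a = 0")
    case True
    have "g b \<ge> g 0 - b" using lb ab a0 by auto
    then have "-1 * b \<le> g b - g 0" by simp
    then show ?thesis using True ab by (simp add: s_def pos_le_divide_eq)
  next
    case False
    then have ap: "a > 0" using a0 by simp
    have "g a \<ge> g 0 - a" using lb a0 by auto
    then have "-1 * a \<le> s * a" using g0 by simp
    then show ?thesis using ap by (metis mult_right_le_imp_le)
  qed
  have ev: "eventually (\<lambda>x. g a + s * (x - a) \<le> g x) at_top"
    using eventually_ge_at_top[of b] by eventually_elim (use cb ab a0 in auto)
  have lim2: "((\<lambda>x. g a + s * (x - a)) \<longlongrightarrow> g a + s * (x - a)) at_top" if "s = 0" for x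
    using that by simp
  show "s \<le> 0"
  proof (rule ccontr)
    assume "\<not> s \<le> 0"
    then have sp: "s > 0" by simp
    have "eventually (\<lambda>x. g x < 1) at_top" using lim by (rule order_tendstoD) simp
    then obtain N where N: "\<And>x. x \<ge> N \<Longrightarrow> g x < 1" by (auto simp: eventually_at_top_linorder)
    from ev obtain N2 where N2: "\<And>x. x \<ge> N2 \<Longrightarrow> g a + s * (x - a) \<le> g x" by (auto simp: eventually_at_top_linorder)
    define x where "x = max (max N N2) (a + (1 - g a) / s)"
    have "s * (x - a) \<ge> s * ((1 - g a) / s)" using sp by (intro mult_left_mono) (auto simp: x_def)
    then have "s * (x - a) \<ge> 1 - g a" using sp by simp
    moreover have "g a + s * (x - a) \<le> g x" by (rule N2) (simp add: x_def)
    moreover have "g x < 1" by (rule N) (simp add: x_def)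
    ultimately show False by linarith
  qed
  show "s = 0 \<longrightarrow> g a - s * a \<le> 0"
  proof
    assume s0: "s = 0"
    have "g a \<le> 0"
    proof (rule tendsto_le[OF _ lim])
      show "((\<lambda>x. g a) \<longlongrightarrow> g a) at_top" by simp
      show "eventually (\<lambda>x. g a \<le> g x) at_top" using ev s0 by simp
    qed simp
    then show "g a - s * a \<le> 0" using s0 by simp
  qed
qed

lemma stepG:
  fixes g :: "real \<Rightarrow> real" and G :: "real set"
  assumes cv: "convex_on {0..} g" and lb: "\<forall>x\<ge>0. g x \<ge> g 0 - x" and lim: "(g \<longlongrightarrow> 0) at_top"
    and finG: "finite G" and G0: "0 \<in> G" and Gnn: "G \<subseteq> {0..}"
    and okm: "okm \<nu> m" and m: "m = g 0" and le: "\<forall>y\<in>G. cf \<nu> y \<le> g y"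
  shows "\<exists>K. goodK K \<and> (\<forall>y\<in>G. cf (\<nu> \<bind> K) y = g y)"
proof -
  define P where "P = {(a, b). a \<in> G \<and> b \<in> G \<and> a < b \<and> (\<forall>c\<in>G. \<not> (a < c \<and> c < b))}"
  define sl where "sl a b = (g b - g a) / (b - a)" for a b
  define \<Lambda> where "\<Lambda> = (\<lambda>(a, b). (g a - sl a b * a, sl a b)) ` P"
  have finP: "finite P"
    by (rule finite_subset[of _ "G \<times> G"]) (auto simp: P_def finG)
  have fin: "finite \<Lambda>" unfolding \<Lambda>_def using finP by simp
  have lines: "\<forall>(\<alpha>, s)\<in>\<Lambda>. \<alpha> \<le> m \<and> -1 \<le> s \<and> s \<le> 0 \<and> (s = 0 \<longrightarrow> \<alpha> \<le> 0)"
  proof (clarify)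
    fix \<alpha> s assume "(\<alpha>, s) \<in> \<Lambda>"
    then obtain a b where ab: "(a, b) \<in> P" and al: "\<alpha> = g a - sl a b * a" and s: "s = sl a b"
      unfolding \<Lambda>_def by auto
    have a0: "0 \<le> a" and abl: "a < b" using ab Gnn by (auto simp: P_def)
    note cp = chord_props[OF cv a0 abl lb lim]
    show "\<alpha> \<le> m \<and> -1 \<le> s \<and> s \<le> 0 \<and> (s = 0 \<longrightarrow> \<alpha> \<le> 0)"
      using cp unfolding al s m sl_def by auto
  qed
  obtain K where K: "goodK K"
    and c: "\<And>x. cf (\<nu> \<bind> K) x = Max (insert (cf \<nu> x) ((\<lambda>(\<alpha>, s). \<alpha> + s * x) ` \<Lambda>))"
    using multi_lemma[OF fin okm lines] by auto
  show ?thesis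
  proof (intro exI[of _ K] conjI ballI K)
    fix y assume yG: "y \<in> G"
    have y0: "0 \<le> y" using yG Gnn by auto
    have "Max (insert (cf \<nu> y) ((\<lambda>(\<alpha>, s). \<alpha> + s * y) ` \<Lambda>)) = g y"
    proof (rule Max_eqI)
      show "finite (insert (cf \<nu> y) ((\<lambda>(\<alpha>, s). \<alpha> + s * y) ` \<Lambda>))" using fin by simp
    next
      fix z assume "z \<in> insert (cf \<nu> y) ((\<lambda>(\<alpha>, s). \<alpha> + s * y) ` \<Lambda>)"
      then consider "z = cf \<nu> y" | a b where "(a, b) \<in> P" "z = g a - sl a b * a + sl a b * y"
        unfolding \<Lambda>_def by auto
      then show "z \<le> g y"
      proof cases
        case 1 then show ?thesis using le yG by auto
      next
        case (2 a b)
        have a0: "0 \<le> a" and abl: "a < b" and adj: "\<not> (a < y \<and> y < b)" using 2 Gnn yG by (auto simp: P_def)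
        have "g a + sl a b * (y - a) \<le> g y"
          using chord_below[OF cv a0 abl y0] adj unfolding sl_def by linarith
        then show ?thesis using 2 by (simp add: algebra_simps)
      qed
    next
      show "g y \<in> insert (cf \<nu> y) ((\<lambda>(\<alpha>, s). \<alpha> + s * y) ` \<Lambda>)"
      proof (cases "y = 0")
        case True
        have "cf \<nu> 0 = m" using cf_neg[OF okm, of 0] by simp
        then show ?thesis using True m by simp
      next
        case False
        then have yp: "0 < y" using y0 by simp
        define A where "A = {c \<in> G. c < y}"
        have finA: "finite A" using finG by (simp add: A_def)
        have A0: "0 \<in> A" using G0 yp by (simp add: A_def)
        define a where "a = Max A"
        have aA: "a \<in> A" unfolding a_def using finA A0 by (intro Max_in) auto
        have amax: "c \<le> a" if "c \<in> A" for c unfolding a_def using finA that by simp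
        have inP: "(a, y) \<in> P" using aA yG amax by (force simp: P_def A_def)
        have aly: "a < y" using aA by (simp add: A_def)
        have "g a - sl a y * a + sl a y * y = g a + sl a y * (y - a)" by (simp add: algebra_simps)
        also have "\<dots> = g y" using aly by (simp add: sl_def)
        finally have "g a - sl a y * a + sl a y * y = g y" .
        moreover have "(g a - sl a y * a, sl a y) \<in> \<Lambda>" unfolding \<Lambda>_def using inP by force
        ultimately show ?thesis by force
      qed
    qed
    then show "cf (\<nu> \<bind> K) y = g y" using c by simp
  qed
qed

primrec mseq :: "(nat \<Rightarrow> real \<Rightarrow> real pmf) \<Rightarrow> real \<Rightarrow> nat \<Rightarrow> real pmf" where
  "mseq Ks m 0 = return_pmf m"
| "mseq Ks m (Suc t) = mseq Ks m t \<bind> Ks t"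

primrec pth :: "(nat \<Rightarrow> real \<Rightarrow> real pmf) \<Rightarrow> real \<Rightarrow> nat \<Rightarrow> (nat \<Rightarrow> real) pmf" where
  "pth Ks m 0 = return_pmf (\<lambda>_. m)"
| "pth Ks m (Suc t) = pth Ks m t \<bind> (\<lambda>w. map_pmf (\<lambda>y. w(Suc t := y)) (Ks t (w t)))"

definition rst :: "real \<Rightarrow> nat \<Rightarrow> (nat \<Rightarrow> real) \<Rightarrow> (nat \<Rightarrow> real)" where
  "rst m u w = (\<lambda>s. if s \<le> u then w s else m)"

lemma path_props:
  assumes gK: "\<forall>t<n. goodK (Ks t)" and m0: "0 \<le> m" and tn: "t \<le> n"
  shows "finite (set_pmf (pth Ks m t)) \<and> (\<forall>w\<in>set_pmf (pth Ks m t). (\<forall>s. 0 \<le> w s) \<and> (\<forall>s>t. w s = m))"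
  using tn
proof (induction t)
  case 0
  then show ?case using m0 by simp
next
  case (Suc t)
  then have IH: "finite (set_pmf (pth Ks m t))" "\<And>w s. w \<in> set_pmf (pth Ks m t) \<Longrightarrow> 0 \<le> w s"
    "\<And>w s. w \<in> set_pmf (pth Ks m t) \<Longrightarrow> s > t \<Longrightarrow> w s = m" by auto
  have K: "goodK (Ks t)" using gK Suc.prems by simp
  have ok: "okm (Ks t (w t)) (w t)" if "w \<in> set_pmf (pth Ks m t)" for w
    using K IH(2)[OF that, of t] by (simp add: goodK_def)
  have "finite (set_pmf (pth Ks m (Suc t)))"
    using IH(1) ok by (auto simp: okm_def)
  moreover have "\<forall>w\<in>set_pmf (pth Ks m (Suc t)). (\<forall>s. 0 \<le> w s) \<and> (\<forall>s>Suc t. w s = m)"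
  proof
    fix w' assume "w' \<in> set_pmf (pth Ks m (Suc t))"
    then obtain w y where w: "w \<in> set_pmf (pth Ks m t)" and y: "y \<in> set_pmf (Ks t (w t))"
      and e: "w' = w(Suc t := y)" by auto
    have "y \<ge> 0" using ok[OF w] y by (auto simp: okm_def)
    then show "(\<forall>s. 0 \<le> w' s) \<and> (\<forall>s>Suc t. w' s = m)"
      using e IH(2)[OF w] IH(3)[OF w] by auto
  qed
  ultimately show ?case by blast
qed

lemma path_marg:
  assumes "s \<le> t"
  shows "map_pmf (\<lambda>w. w s) (pth Ks m t) = mseq Ks m s"
  using assms
proof (induction t arbitrary: s)
  case 0
  then show ?case by simp
next
  case (Suc t)
  have "map_pmf (\<lambda>w. w s) (pth Ks m (Suc t)) =
        pth Ks m t \<bind> (\<lambda>w. map_pmf (\<lambda>y. (w(Suc t := y)) s) (Ks t (w t)))"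
    by (simp add: map_bind_pmf map_pmf_comp)
  also have "\<dots> = mseq Ks m s"
  proof (cases "s = Suc t")
    case True
    then have "pth Ks m t \<bind> (\<lambda>w. map_pmf (\<lambda>y. (w(Suc t := y)) s) (Ks t (w t)))
        = pth Ks m t \<bind> (\<lambda>w. Ks t (w t))" by simp
    also have "\<dots> = map_pmf (\<lambda>w. w t) (pth Ks m t) \<bind> Ks t" by (simp add: bind_map_pmf)
    also have "\<dots> = mseq Ks m s" using Suc.IH[of t] True by simp
    finally show ?thesis .
  next
    case False
    then have st: "s \<le> t" using Suc.prems by simp
    then have "pth Ks m t \<bind> (\<lambda>w. map_pmf (\<lambda>y. (w(Suc t := y)) s) (Ks t (w t)))
        = pth Ks m t \<bind> (\<lambda>w. return_pmf (w s))" using False by simp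
    also have "\<dots> = map_pmf (\<lambda>w. w s) (pth Ks m t)" by (simp add: map_pmf_def)
    also have "\<dots> = mseq Ks m s" using Suc.IH[OF st] .
    finally show ?thesis .
  qed
  finally show ?case .
qed

lemma path_rst:
  assumes gK: "\<forall>t<n. goodK (Ks t)" and m0: "0 \<le> m" and tn: "t \<le> n" and ut: "u \<le> t"
  shows "map_pmf (rst m u) (pth Ks m t) = pth Ks m u"
  using tn ut
proof (induction t)
  case 0
  then have u0: "u = 0" by simp
  show ?case unfolding u0 by (simp add: rst_def)
next
  case (Suc t)
  show ?case
  proof (cases "u = Suc t")
    case True
    have "map_pmf (rst m u) (pth Ks m u) = map_pmf (\<lambda>x. x) (pth Ks m u)"
    proof (rule map_pmf_cong[OF refl])
      fix w assume "w \<in> set_pmf (pth Ks m u)"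
      then have "\<forall>s>u. w s = m" using path_props[OF gK m0, of u] Suc.prems True by auto
      then show "rst m u w = w" by (auto simp: rst_def fun_eq_iff)
    qed
    then show ?thesis using True by simp
  next
    case False
    then have ut: "u \<le> t" using Suc.prems by simp
    have r: "rst m u (w(Suc t := y)) = rst m u w" for w y
      using ut by (auto simp: rst_def fun_eq_iff)
    have "map_pmf (rst m u) (pth Ks m (Suc t)) =
        pth Ks m t \<bind> (\<lambda>w. map_pmf (\<lambda>y. rst m u (w(Suc t := y))) (Ks t (w t)))"
      by (simp add: map_bind_pmf map_pmf_comp)
    also have "\<dots> = pth Ks m t \<bind> (\<lambda>w. return_pmf (rst m u w))" by (simp only: r map_pmf_const)
    also have "\<dots> = map_pmf (rst m u) (pth Ks m t)" by (simp add: map_pmf_def)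
    also have "\<dots> = pth Ks m u" using Suc ut by simp
    finally show ?thesis .
  qed
qed

lemma path_reduce:
  fixes F :: "(nat \<Rightarrow> real) \<Rightarrow> real"
  assumes gK: "\<forall>t<n. goodK (Ks t)" and m0: "0 \<le> m" and tn: "t \<le> n" and ut: "u \<le> t"
    and F: "\<And>w. F (rst m u w) = F w"
  shows "measure_pmf.expectation (pth Ks m t) F = measure_pmf.expectation (pth Ks m u) F"
proof -
  have "measure_pmf.expectation (pth Ks m u) F = measure_pmf.expectation (map_pmf (rst m u) (pth Ks m t)) F"
    using path_rst[OF gK m0 tn ut] by simp
  also have "\<dots> = measure_pmf.expectation (pth Ks m t) F" by (simp add: F)
  finally show ?thesis by simp
qed

lemma path_mart:
  assumes gK: "\<forall>t<n. goodK (Ks t)" and m0: "0 \<le> m" and tn: "Suc t \<le> n"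
    and D: "\<And>w w'. (\<forall>s\<le>t. w s = w' s) \<Longrightarrow> (w \<in> A \<longleftrightarrow> w' \<in> A)"
  shows "measure_pmf.expectation (pth Ks m n) (\<lambda>w. indicator A w * w (Suc t)) =
         measure_pmf.expectation (pth Ks m n) (\<lambda>w. indicator A w * w t)"
proof -
  have indr: "indicator A (rst m u w) = (indicator A w :: real)" if "t \<le> u" for u w
    using D[of "rst m u w" w] that by (auto simp: rst_def indicator_def)
  have indu: "indicator A (w(Suc t := y)) = (indicator A w :: real)" for w y
    using D[of "w(Suc t := y)" w] by (auto simp: indicator_def)
  have "measure_pmf.expectation (pth Ks m n) (\<lambda>w. indicator A w * w (Suc t)) =
        measure_pmf.expectation (pth Ks m (Suc t)) (\<lambda>w. indicator A w * w (Suc t))"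
  proof (rule path_reduce[OF gK m0 order.refl tn])
    fix w
    show "indicator A (rst m (Suc t) w) * rst m (Suc t) w (Suc t) = indicator A w * w (Suc t)"
      using indr[of "Suc t" w] by (simp add: rst_def)
  qed
  also have "\<dots> = measure_pmf.expectation (pth Ks m t)
      (\<lambda>w. measure_pmf.expectation (map_pmf (\<lambda>y. w(Suc t := y)) (Ks t (w t))) (\<lambda>w. indicator A w * w (Suc t)))"
  proof -
    have pp: "finite (set_pmf (pth Ks m t))" "\<And>w s. w \<in> set_pmf (pth Ks m t) \<Longrightarrow> 0 \<le> w s"
      using path_props[OF gK m0, of t] tn by auto
    have K: "goodK (Ks t)" using gK tn by simp
    show ?thesis unfolding pth.simps
    proof (rule exp_bind[OF pp(1)])
      fix w assume "w \<in> set_pmf (pth Ks m t)"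
      then have "okm (Ks t (w t)) (w t)" using K pp(2) by (simp add: goodK_def)
      then show "finite (set_pmf (map_pmf (\<lambda>y. w(Suc t := y)) (Ks t (w t))))" by (simp add: okm_def)
    qed
  qed
  also have "\<dots> = measure_pmf.expectation (pth Ks m t) (\<lambda>w. indicator A w * w t)"
  proof (rule integral_cong_AE)
    show "AE w in measure_pmf (pth Ks m t).
      measure_pmf.expectation (map_pmf (\<lambda>y. w(Suc t := y)) (Ks t (w t))) (\<lambda>w. indicator A w * w (Suc t))
      = indicator A w * w t"
    proof (unfold AE_measure_pmf_iff, intro ballI)
      fix w assume w: "w \<in> set_pmf (pth Ks m t)"
      have "0 \<le> w t" using path_props[OF gK m0, of t] tn w by auto
      then have ok: "okm (Ks t (w t)) (w t)" using gK tn by (simp add: goodK_def)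
      have "measure_pmf.expectation (map_pmf (\<lambda>y. w(Suc t := y)) (Ks t (w t))) (\<lambda>w. indicator A w * w (Suc t))
          = measure_pmf.expectation (Ks t (w t)) (\<lambda>y. indicator A w * y)"
        by (simp add: indu)
      also have "\<dots> = indicator A w * w t" using ok by (simp add: okm_def)
      finally show "measure_pmf.expectation (map_pmf (\<lambda>y. w(Suc t := y)) (Ks t (w t))) (\<lambda>w. indicator A w * w (Suc t))
          = indicator A w * w t" .
    qed
  qed auto
  also have "\<dots> = measure_pmf.expectation (pth Ks m n) (\<lambda>w. indicator A w * w t)"
  proof (rule path_reduce[OF gK m0, symmetric])
    fix w
    show "indicator A (rst m t w) * rst m t w t = indicator A w * w t"
      using indr[of t w] by (simp add: rst_def)
  qed (use tn in auto)
  finally show ?thesis .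
qed

lemma nf_sets:
  fixes P :: "(nat \<Rightarrow> real) pmf"
  shows "sets (natural_filtration (measure_pmf P) (\<lambda>t w. \<bar>w t\<bar>) t) =
    sigma_sets UNIV (\<Union>s\<in>{1..t}. {(\<lambda>w. \<bar>w s\<bar>) -` B \<inter> UNIV | B. B \<in> sets borel})"
  unfolding natural_filtration_def by (subst sets_measure_of) auto

lemma nf_space:
  fixes P :: "(nat \<Rightarrow> real) pmf"
  shows "space (natural_filtration (measure_pmf P) (\<lambda>t w. \<bar>w t\<bar>) t) = UNIV"
  unfolding natural_filtration_def by (subst space_measure_of_conv) auto

lemma nf_D:
  fixes P :: "(nat \<Rightarrow> real) pmf"
  assumes "A \<in> sets (natural_filtration (measure_pmf P) (\<lambda>t w. \<bar>w t\<bar>) t)"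
  shows "\<forall>w w'. (\<forall>s\<le>t. w s = w' s) \<longrightarrow> (w \<in> A \<longleftrightarrow> w' \<in> A)"
proof -
  have "A \<in> sigma_sets UNIV (\<Union>s\<in>{1..t}. {(\<lambda>w. \<bar>w s\<bar>) -` B \<inter> UNIV | B. B \<in> sets borel})"
    using assms nf_sets by blast
  then show ?thesis
  proof (induction rule: sigma_sets.induct)
    case (Basic a)
    then obtain s B where "s \<in> {1..t}" "a = (\<lambda>w. \<bar>w s\<bar>) -` B \<inter> UNIV" by auto
    then show ?case by auto
  next
    case Empty then show ?case by simp
  next
    case (Compl a) then show ?case by blast
  next
    case (Union a) then show ?case by blast
  qed
qed

lemma pth_martingale:
  assumes gK: "\<forall>t<n. goodK (Ks t)" and m0: "0 \<le> m"
  shows "finite_martingale (measure_pmf (pth Ks m n)) (\<lambda>t w. \<bar>w t\<bar>) n"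
proof -
  define M where "M = measure_pmf (pth Ks m n)"
  have fin: "finite (set_pmf (pth Ks m n))" and nn: "\<And>w s. w \<in> set_pmf (pth Ks m n) \<Longrightarrow> 0 \<le> w s"
    using path_props[OF gK m0 order.refl] by auto
  have int: "integrable M f" for f :: "(nat \<Rightarrow> real) \<Rightarrow> real"
    unfolding M_def by (rule integrable_measure_pmf_finite[OF fin])
  have ce: "AE w in M. real_cond_exp M (natural_filtration M (\<lambda>t w. \<bar>w t\<bar>) t) (\<lambda>w. \<bar>w (Suc t)\<bar>) w = \<bar>w t\<bar>"
    if t: "t \<in> {1..<n}" for t
  proof -
    define F where "F = natural_filtration M (\<lambda>t w. \<bar>w t\<bar>) t"
    have sub: "subalgebra M F"
      unfolding subalgebra_def F_def M_def using nf_space by auto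
    have fm: "finite_measure M" using prob_space_measure_pmf unfolding prob_space_def M_def by blast
    have fms: "finite_measure_subalgebra M F"
      unfolding finite_measure_subalgebra_def finite_measure_subalgebra_axioms_def using fm sub by blast
    interpret sfs: sigma_finite_subalgebra M F
      by (rule finite_measure_subalgebra_is_sigma_finite[OF fms])
    show ?thesis unfolding F_def[symmetric]
    proof (rule sfs.real_cond_exp_charact)
      fix A assume A: "A \<in> sets F"
      have D: "\<And>w w'. (\<forall>s\<le>t. w s = w' s) \<Longrightarrow> (w \<in> A \<longleftrightarrow> w' \<in> A)"
        using nf_D[of A "pth Ks m n" t] A by (auto simp: F_def M_def)
      have "(\<integral>w\<in>A. \<bar>w (Suc t)\<bar> \<partial>M) = measure_pmf.expectation (pth Ks m n) (\<lambda>w. indicator A w * w (Suc t))"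
        unfolding set_lebesgue_integral_def M_def
        by (rule integral_cong_AE) (auto simp: AE_measure_pmf_iff nn)
      also have "\<dots> = measure_pmf.expectation (pth Ks m n) (\<lambda>w. indicator A w * w t)"
        by (rule path_mart[OF gK m0 _ D]) (use t in auto)
      also have "\<dots> = (\<integral>w\<in>A. \<bar>w t\<bar> \<partial>M)"
        unfolding set_lebesgue_integral_def M_def
        by (rule integral_cong_AE) (auto simp: AE_measure_pmf_iff nn)
      finally show "(\<integral>w\<in>A. \<bar>w (Suc t)\<bar> \<partial>M) = (\<integral>w\<in>A. \<bar>w t\<bar> \<partial>M)" .
    next
      show "integrable M (\<lambda>w. \<bar>w (Suc t)\<bar>)" by (rule int)
      show "integrable M (\<lambda>w. \<bar>w t\<bar>)" by (rule int)
      show "(\<lambda>w. \<bar>w t\<bar>) \<in> borel_measurable F"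
      proof (rule measurableI)
        fix B :: "real set" assume B: "B \<in> sets borel"
        have "(\<lambda>w. \<bar>w t\<bar>) -` B \<inter> space F = (\<lambda>w. \<bar>w t\<bar>) -` B \<inter> UNIV"
          using nf_space by (simp add: F_def M_def)
        also have "\<dots> \<in> sets F" unfolding F_def M_def nf_sets
        proof (rule sigma_sets.Basic, rule UN_I)
          show "t \<in> {1..t}" using t by auto
          show "(\<lambda>w. \<bar>w t\<bar>) -` B \<inter> UNIV \<in> {(\<lambda>w. \<bar>w t\<bar>) -` B \<inter> UNIV | B. B \<in> sets borel}"
            using B by blast
        qed
        finally show "(\<lambda>w. \<bar>w t\<bar>) -` B \<inter> space F \<in> sets F" .
      qed simp
    qed
  qed
  show ?thesis
    unfolding finite_martingale_def M_def[symmetric]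
    using ce int by (auto simp: M_def prob_space_measure_pmf)
qed

primrec museq :: "(nat \<Rightarrow> real pmf \<Rightarrow> real \<Rightarrow> real pmf) \<Rightarrow> real \<Rightarrow> nat \<Rightarrow> real pmf" where
  "museq KS m 0 = return_pmf m"
| "museq KS m (Suc t) = museq KS m t \<bind> KS t (museq KS m t)"

lemma mseq_museq: "mseq (\<lambda>t. KS t (museq KS m t)) m t = museq KS m t"
  by (induction t) auto

lemma cf_return: "cf (return_pmf m) y = max (m - y) 0"
  by (simp add: cf_def)

lemma reverse_dir:
  fixes n :: nat and U :: "nat \<Rightarrow> nat" and k C :: "nat \<Rightarrow> nat \<Rightarrow> real" and g :: "nat \<Rightarrow> real \<Rightarrow> real"
  assumes kC: "\<forall>t\<in>{1..n}. \<forall>j\<in>{1..U t}. k t j \<ge> 0 \<and> C t j \<ge> 0"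
    and cv: "\<forall>t\<in>{1..n}. convex_on {0..} (g t)"
    and nn: "\<forall>t\<in>{1..n}. \<forall>x\<ge>0. g t x \<ge> 0"
    and mono: "\<forall>t\<in>{1..<n}. \<forall>x\<ge>0. g t x \<le> g (Suc t) x"
    and cond: "\<forall>t\<in>{1..n}.
               g t 0 = g 1 0 \<and>
               (\<forall>x\<ge>0. g t x \<ge> g t 0 - x) \<and>
               (g t \<longlongrightarrow> 0) at_top \<and>
               (\<forall>j\<in>{1..U t}. g t (k t j) = C t j)"
  shows "\<exists>(M :: (nat \<Rightarrow> real) measure) X.
            finite_martingale M X n \<and>
            (\<forall>t\<in>{1..n}. \<forall>\<omega>\<in>space M. X t \<omega> \<ge> 0) \<and>
            (\<forall>t\<in>{1..n}. \<forall>j\<in>{1..U t}.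
               integral\<^sup>L M (\<lambda>\<omega>. max (X t \<omega> - k t j) 0) = C t j)"
proof -
  have c0: "g t 0 = g 1 0" if "t \<in> {1..n}" for t using cond that by blast
  have clb: "g t 0 - x \<le> g t x" if "t \<in> {1..n}" "0 \<le> x" for t x using cond that by blast
  have clim: "(g t \<longlongrightarrow> 0) at_top" if "t \<in> {1..n}" for t using cond that by blast
  have cC: "g t (k t j) = C t j" if "t \<in> {1..n}" "j \<in> {1..U t}" for t j using cond that by blast
  define m where "m = max (g 1 0) 0"
  have m0: "0 \<le> m" by (simp add: m_def)
  have mg: "m = g t 0" if "t \<in> {1..n}" for t
  proof -
    have "1 \<in> {1..n}" using that by auto
    then have "g 1 0 \<ge> 0" using nn by auto
    then show ?thesis using c0[OF that] by (simp add: m_def)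
  qed
  define G where "G = insert 0 ((\<lambda>(t, j). k t j) ` (SIGMA t:{1..n}. {1..U t}))"
  have finG: "finite G" unfolding G_def by (intro finite_insert[THEN iffD2] finite_imageI finite_SigmaI) auto
  have G0: "0 \<in> G" by (simp add: G_def)
  have Gnn: "G \<subseteq> {0..}" using kC by (auto simp: G_def)
  have kG: "k t j \<in> G" if "t \<in> {1..n}" "j \<in> {1..U t}" for t j
    using that by (force simp: G_def)
  define KS where "KS t \<nu> = (SOME K. goodK K \<and> (\<forall>y\<in>G. cf (\<nu> \<bind> K) y = g (Suc t) y))" for t \<nu>
  have step: "goodK (KS t (museq KS m t)) \<and> (\<forall>y\<in>G. cf (museq KS m (Suc t)) y = g (Suc t) y)"
    if tn: "t < n" and ok: "okm (museq KS m t) m" and val: "1 \<le> t \<longrightarrow> (\<forall>y\<in>G. cf (museq KS m t) y = g t y)" for t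
  proof -
    have St: "Suc t \<in> {1..n}" using tn by simp
    have le: "\<forall>y\<in>G. cf (museq KS m t) y \<le> g (Suc t) y"
    proof
      fix y assume yG: "y \<in> G"
      then have y0: "0 \<le> y" using Gnn by auto
      show "cf (museq KS m t) y \<le> g (Suc t) y"
      proof (cases "t = 0")
        case True
        have "cf (museq KS m t) y = max (m - y) 0" using True by (simp add: cf_return)
        moreover have "g 1 y \<ge> 0" using nn y0 St by auto
        moreover have "g 1 y \<ge> g 1 0 - y" using clb[of 1 y] y0 St by auto
        moreover have "m = g 1 0" using mg[of 1] St by auto
        ultimately show ?thesis using True by simp
      next
        case False
        then have "cf (museq KS m t) y = g t y" using val yG by simp
        also have "\<dots> \<le> g (Suc t) y" using mono False tn y0 by auto
        finally show ?thesis .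
      qed
    qed
    have ex: "\<exists>K. goodK K \<and> (\<forall>y\<in>G. cf (museq KS m t \<bind> K) y = g (Suc t) y)"
    proof (rule stepG[OF _ _ _ finG G0 Gnn ok _ le])
      show "convex_on {0..} (g (Suc t))" using cv St by auto
      show "\<forall>x\<ge>0. g (Suc t) 0 - x \<le> g (Suc t) x" using clb[OF St] by blast
      show "(g (Suc t) \<longlongrightarrow> 0) at_top" by (rule clim[OF St])
      show "m = g (Suc t) 0" by (rule mg[OF St])
    qed
    have "goodK (KS t (museq KS m t)) \<and> (\<forall>y\<in>G. cf (museq KS m t \<bind> KS t (museq KS m t)) y = g (Suc t) y)"
    proof -
      have e: "KS t (museq KS m t) = (SOME K. goodK K \<and> (\<forall>y\<in>G. cf (museq KS m t \<bind> K) y = g (Suc t) y))"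
        by (rule KS_def)
      show ?thesis unfolding e by (rule someI_ex[OF ex])
    qed
    then show ?thesis by simp
  qed
  have inv: "okm (museq KS m t) m \<and> (1 \<le> t \<longrightarrow> (\<forall>y\<in>G. cf (museq KS m t) y = g t y))" if "t \<le> n" for t
    using that
  proof (induction t)
    case 0
    then show ?case using m0 by (simp add: okm_def)
  next
    case (Suc t)
    then have tn: "t < n" by simp
    have IH: "okm (museq KS m t) m" "1 \<le> t \<longrightarrow> (\<forall>y\<in>G. cf (museq KS m t) y = g t y)"
      using Suc by auto
    note st = step[OF tn IH]
    have "okm (museq KS m (Suc t)) m" using okm_bind[OF IH(1)] st by simp
    then show ?case using st by simp
  qed
  define Ks where "Ks t = KS t (museq KS m t)" for t
  have gK: "\<forall>t<n. goodK (Ks t)"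
  proof (intro allI impI)
    fix t assume tn: "t < n"
    have "okm (museq KS m t) m \<and> (1 \<le> t \<longrightarrow> (\<forall>y\<in>G. cf (museq KS m t) y = g t y))" using inv tn by simp
    then show "goodK (Ks t)" using step[OF tn] by (simp add: Ks_def)
  qed
  define M where "M = measure_pmf (pth Ks m n)"
  have nnw: "\<And>w s. w \<in> set_pmf (pth Ks m n) \<Longrightarrow> 0 \<le> w s"
    using path_props[OF gK m0 order.refl] by auto
  show ?thesis
  proof (intro exI[of _ M] exI[of _ "\<lambda>t w. \<bar>w t\<bar>"] conjI)
    show "finite_martingale M (\<lambda>t w. \<bar>w t\<bar>) n" unfolding M_def by (rule pth_martingale[OF gK m0])
    show "\<forall>t\<in>{1..n}. \<forall>w\<in>space M. 0 \<le> \<bar>w t\<bar>" by simp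
    show "\<forall>t\<in>{1..n}. \<forall>j\<in>{1..U t}. integral\<^sup>L M (\<lambda>w. max (\<bar>w t\<bar> - k t j) 0) = C t j"
    proof (intro ballI)
    fix t assume t: "t \<in> {1..n}"
    fix j assume j: "j \<in> {1..U t}"
    have "integral\<^sup>L M (\<lambda>w. max (\<bar>w t\<bar> - k t j) 0) = measure_pmf.expectation (pth Ks m n) (\<lambda>w. max (w t - k t j) 0)"
      unfolding M_def by (rule integral_cong_AE) (auto simp: AE_measure_pmf_iff nnw)
    also have "\<dots> = measure_pmf.expectation (map_pmf (\<lambda>w. w t) (pth Ks m n)) (\<lambda>y. max (y - k t j) 0)"
      by simp
    also have "\<dots> = cf (museq KS m t) (k t j)"
    proof -
      have Ks_eq: "Ks = (\<lambda>t. KS t (museq KS m t))" by (intro ext) (simp add: Ks_def)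
      have "map_pmf (\<lambda>w. w t) (pth Ks m n) = museq KS m t"
        using path_marg[of t n Ks m] t mseq_museq[of KS m t] by (simp add: Ks_eq)
      then show ?thesis by (simp add: cf_def)
    qed
    also have "\<dots> = g t (k t j)" using inv[of t] t kG[OF t j] by auto
    also have "\<dots> = C t j" by (rule cC[OF t j])
    finally show "integral\<^sup>L M (\<lambda>w. max (\<bar>w t\<bar> - k t j) 0) = C t j" .
    qed
  qed
qed

lemma hinge_convex:
  fixes z x y u :: real
  assumes "0 \<le> u" "u \<le> 1"
  shows "max (z - ((1 - u) * x + u * y)) 0 \<le> (1 - u) * max (z - x) 0 + u * max (z - y) 0"
proof -
  have a: "(1 - u) * (z - x) \<le> (1 - u) * max (z - x) 0" using assms by (intro mult_left_mono) auto
  have b: "u * (z - y) \<le> u * max (z - y) 0" using assms by (intro mult_left_mono) auto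
  have c: "0 \<le> (1 - u) * max (z - x) 0" "0 \<le> u * max (z - y) 0" using assms by auto
  have "z - ((1 - u) * x + u * y) = (1 - u) * (z - x) + u * (z - y)" by (simp add: algebra_simps)
  then show ?thesis using a b c by (simp only: max_def) (auto split: if_splits)
qed

lemma forward_dir:
  fixes n :: nat and U :: "nat \<Rightarrow> nat" and k C :: "nat \<Rightarrow> nat \<Rightarrow> real"
    and M :: "(nat \<Rightarrow> real) measure" and X :: "nat \<Rightarrow> (nat \<Rightarrow> real) \<Rightarrow> real"
  assumes mart: "finite_martingale M X n"
    and pos: "\<forall>t\<in>{1..n}. \<forall>\<omega>\<in>space M. X t \<omega> \<ge> 0"
    and calls: "\<forall>t\<in>{1..n}. \<forall>j\<in>{1..U t}. integral\<^sup>L M (\<lambda>\<omega>. max (X t \<omega> - k t j) 0) = C t j"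
  shows "\<exists>g :: nat \<Rightarrow> real \<Rightarrow> real.
            (\<forall>t\<in>{1..n}. convex_on {0..} (g t)) \<and>
            (\<forall>t\<in>{1..n}. \<forall>x\<ge>0. g t x \<ge> 0) \<and>
            (\<forall>t\<in>{1..<n}. \<forall>x\<ge>0. g t x \<le> g (Suc t) x) \<and>
            (\<forall>t\<in>{1..n}.
               g t 0 = g 1 0 \<and>
               (\<forall>x\<ge>0. g t x \<ge> g t 0 - x) \<and>
               (g t \<longlongrightarrow> 0) at_top \<and>
               (\<forall>j\<in>{1..U t}. g t (k t j) = C t j))"
proof -
  have ps: "prob_space M" using mart by (simp add: finite_martingale_def)
  interpret prob_space M by (rule ps)
  have meas: "X t \<in> borel_measurable M" if "t \<in> {1..n}" for t
    using mart that unfolding finite_martingale_def by blast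
  have intX: "integrable M (X t)" if "t \<in> {1..n}" for t
    using mart that unfolding finite_martingale_def by blast
  have ce: "AE \<omega> in M. real_cond_exp M (natural_filtration M X t) (X (Suc t)) \<omega> = X t \<omega>" if "t \<in> {1..<n}" for t
    using mart that unfolding finite_martingale_def by blast
  have posX: "0 \<le> X t \<omega>" if "t \<in> {1..n}" "\<omega> \<in> space M" for t \<omega> using pos that by blast
  define g where "g t x = integral\<^sup>L M (\<lambda>\<omega>. max (X t \<omega> - x) 0)" for t x
  have inth: "integrable M (\<lambda>\<omega>. max (X t \<omega> - x) 0)" if "t \<in> {1..n}" for t x
    using intX[OF that] by (intro integrable_max Bochner_Integration.integrable_diff) auto
  have mA: "integral\<^sup>L M (\<lambda>\<omega>. indicator A \<omega> * X (Suc t) \<omega>) = integral\<^sup>L M (\<lambda>\<omega>. indicator A \<omega> * X t \<omega>)"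
    if t: "t \<in> {1..<n}" and A: "A \<in> sets (natural_filtration M X t)" for t A
  proof -
    define F where "F = natural_filtration M X t"
    define gen where "gen = (\<Union>s\<in>{1..t}. {X s -` B \<inter> space M | B. B \<in> sets borel})"
    have genM: "gen \<subseteq> sets M"
    proof
      fix a assume "a \<in> gen"
      then obtain s B where s: "s \<in> {1..t}" and B: "B \<in> sets borel" and a: "a = X s -` B \<inter> space M"
        unfolding gen_def by blast
      have "s \<in> {1..n}" using s t by auto
      then show "a \<in> sets M" unfolding a using measurable_sets[OF meas B] by blast
    qed
    have genP: "gen \<subseteq> Pow (space M)" unfolding gen_def by auto
    have setsF: "sets F = sigma_sets (space M) gen"
      unfolding F_def natural_filtration_def gen_def[symmetric] using genP by simp
    have spF: "space F = space M"
      unfolding F_def natural_filtration_def gen_def[symmetric] using genP by (simp add: space_measure_of_conv)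
    have sub: "subalgebra M F"
      unfolding subalgebra_def using setsF spF sets.sigma_sets_subset[OF genM] by simp
    have fm: "finite_measure M" using ps unfolding prob_space_def by blast
    have fms: "finite_measure_subalgebra M F"
      unfolding finite_measure_subalgebra_def finite_measure_subalgebra_axioms_def using fm sub by blast
    interpret sfs: sigma_finite_subalgebra M F
      by (rule finite_measure_subalgebra_is_sigma_finite[OF fms])
    have St: "Suc t \<in> {1..n}" "t \<in> {1..n}" using t by auto
    have AF: "A \<in> sets F" using A by (simp add: F_def)
    have AM: "A \<in> sets M" using AF sub unfolding subalgebra_def by blast
    have "(\<integral>\<omega>\<in>A. X (Suc t) \<omega> \<partial>M) = (\<integral>\<omega>\<in>A. real_cond_exp M F (X (Suc t)) \<omega> \<partial>M)"
      by (rule sfs.real_cond_exp_intA[OF intX[OF St(1)] AF])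
    also have "\<dots> = (\<integral>\<omega>\<in>A. X t \<omega> \<partial>M)"
      unfolding set_lebesgue_integral_def
    proof (rule integral_cong_AE)
      show "(\<lambda>\<omega>. indicator A \<omega> *\<^sub>R real_cond_exp M F (X (Suc t)) \<omega>) \<in> borel_measurable M"
        using AM by (intro borel_measurable_scaleR borel_measurable_indicator borel_measurable_cond_exp2)
      show "(\<lambda>\<omega>. indicator A \<omega> *\<^sub>R X t \<omega>) \<in> borel_measurable M"
        using AM meas[OF St(2)] by (intro borel_measurable_scaleR borel_measurable_indicator)
      show "AE \<omega> in M. indicator A \<omega> *\<^sub>R real_cond_exp M F (X (Suc t)) \<omega> = indicator A \<omega> *\<^sub>R X t \<omega>"
        using ce[OF t] unfolding F_def by eventually_elim simp
    qed
    finally show ?thesis unfolding set_lebesgue_integral_def by simp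
  qed
  have Xset: "{\<omega> \<in> space M. x < X t \<omega>} \<in> sets (natural_filtration M X t)" if "t \<in> {1..n}" for t x
  proof -
    define gen where "gen = (\<Union>s\<in>{1..t}. {X s -` B \<inter> space M | B. B \<in> sets borel})"
    have genP: "gen \<subseteq> Pow (space M)" unfolding gen_def by auto
    have "{\<omega> \<in> space M. x < X t \<omega>} = X t -` {x<..} \<inter> space M" by auto
    also have "\<dots> \<in> gen" unfolding gen_def
    proof (rule UN_I)
      show "t \<in> {1..t}" using that by auto
      show "X t -` {x<..} \<inter> space M \<in> {X t -` B \<inter> space M | B. B \<in> sets borel}"
        by (intro CollectI exI[of _ "{x<..}"] conjI) auto
    qed
    finally have "{\<omega> \<in> space M. x < X t \<omega>} \<in> sigma_sets (space M) gen" by (rule sigma_sets.Basic)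
    then show ?thesis unfolding natural_filtration_def gen_def[symmetric] using genP by simp
  qed
  have g0: "g t 0 = integral\<^sup>L M (X t)" if "t \<in> {1..n}" for t
    unfolding g_def using Bochner_Integration.integral_cong[of M M "\<lambda>\<omega>. max (X t \<omega> - 0) 0" "X t"] posX[OF that] by auto
  have mean: "integral\<^sup>L M (X t) = integral\<^sup>L M (X 1)" if "t \<in> {1..n}" for t
    using that
  proof (induction t)
    case 0 then show ?case by simp
  next
    case (Suc t)
    show ?case
    proof (cases "t = 0")
      case True then show ?thesis by simp
    next
      case False
      then have t: "t \<in> {1..<n}" using Suc.prems by auto
      have "integral\<^sup>L M (\<lambda>\<omega>. indicator (space M) \<omega> * X (Suc t) \<omega>) = integral\<^sup>L M (\<lambda>\<omega>. indicator (space M) \<omega> * X t \<omega>)"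
        by (rule mA[OF t]) (simp add: natural_filtration_def)
      moreover have "integral\<^sup>L M (\<lambda>\<omega>. indicator (space M) \<omega> * X s \<omega>) = integral\<^sup>L M (X s)" for s
        by (rule Bochner_Integration.integral_cong) auto
      ultimately have "integral\<^sup>L M (X (Suc t)) = integral\<^sup>L M (X t)" by simp
      then show ?thesis using Suc.IH t by auto
    qed
  qed
  show ?thesis
  proof (intro exI[of _ g] conjI ballI allI impI)
    fix t assume t: "t \<in> {1..n}"
    show "convex_on {0..} (g t)"
    proof (rule convex_onI)
      fix u x y :: real assume u: "0 < u" "u < 1" and x: "x \<in> {0..}" and y: "y \<in> {0..}"
      have "g t ((1 - u) *\<^sub>R x + u *\<^sub>R y) \<le> integral\<^sup>L M (\<lambda>\<omega>. (1 - u) * max (X t \<omega> - x) 0 + u * max (X t \<omega> - y) 0)"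
        unfolding g_def
      proof (rule integral_mono)
        show "integrable M (\<lambda>\<omega>. max (X t \<omega> - ((1 - u) *\<^sub>R x + u *\<^sub>R y)) 0)" by (rule inth[OF t])
        show "integrable M (\<lambda>\<omega>. (1 - u) * max (X t \<omega> - x) 0 + u * max (X t \<omega> - y) 0)"
          using inth[OF t] by auto
        fix \<omega> show "max (X t \<omega> - ((1 - u) *\<^sub>R x + u *\<^sub>R y)) 0 \<le> (1 - u) * max (X t \<omega> - x) 0 + u * max (X t \<omega> - y) 0"
          using hinge_convex[of u "X t \<omega>" x y] u by simp
      qed
      also have "\<dots> = (1 - u) * g t x + u * g t y"
        unfolding g_def using inth[OF t] by simp
      finally show "g t ((1 - u) *\<^sub>R x + u *\<^sub>R y) \<le> (1 - u) * g t x + u * g t y" .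
    qed (simp add: convex_real_interval)
  next
    fix t x assume t: "t \<in> {1..n}" and "0 \<le> (x::real)"
    show "0 \<le> g t x" unfolding g_def by (rule integral_nonneg_AE) auto
  next
    fix t x assume t: "t \<in> {1..<n}" and x: "0 \<le> (x::real)"
    have St: "Suc t \<in> {1..n}" "t \<in> {1..n}" using t by auto
    define A where "A = {\<omega> \<in> space M. x < X t \<omega>}"
    have AF: "A \<in> sets (natural_filtration M X t)" unfolding A_def by (rule Xset[OF St(2)])
    have AM: "A \<in> sets M" unfolding A_def using meas[OF St(2)] by measurable
    have iA: "integrable M (\<lambda>\<omega>. indicator A \<omega> * X s \<omega>)" if "s \<in> {1..n}" for s
      using integrable_mult_indicator[OF AM intX[OF that]] by simp
    have iA1: "integrable M (\<lambda>\<omega>. indicator A \<omega> * x)"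
      using integrable_mult_indicator[OF AM integrable_const[of x]] by simp
    have "g t x = integral\<^sup>L M (\<lambda>\<omega>. indicator A \<omega> * X t \<omega> - indicator A \<omega> * x)"
      unfolding g_def by (rule Bochner_Integration.integral_cong) (auto simp: A_def indicator_def max_def)
    also have "\<dots> = integral\<^sup>L M (\<lambda>\<omega>. indicator A \<omega> * X t \<omega>) - integral\<^sup>L M (\<lambda>\<omega>. indicator A \<omega> * x)"
      by (rule Bochner_Integration.integral_diff[OF iA[OF St(2)] iA1])
    also have "\<dots> = integral\<^sup>L M (\<lambda>\<omega>. indicator A \<omega> * X (Suc t) \<omega>) - integral\<^sup>L M (\<lambda>\<omega>. indicator A \<omega> * x)"
      using mA[OF t AF] by simp
    also have "\<dots> = integral\<^sup>L M (\<lambda>\<omega>. indicator A \<omega> * X (Suc t) \<omega> - indicator A \<omega> * x)"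
      by (rule Bochner_Integration.integral_diff[OF iA[OF St(1)] iA1, symmetric])
    also have "\<dots> \<le> g (Suc t) x"
      unfolding g_def
    proof (rule integral_mono)
      show "integrable M (\<lambda>\<omega>. indicator A \<omega> * X (Suc t) \<omega> - indicator A \<omega> * x)"
        using iA[OF St(1)] iA1 by auto
      show "integrable M (\<lambda>\<omega>. max (X (Suc t) \<omega> - x) 0)" by (rule inth[OF St(1)])
      fix \<omega> show "indicator A \<omega> * X (Suc t) \<omega> - indicator A \<omega> * x \<le> max (X (Suc t) \<omega> - x) 0"
        by (auto simp: indicator_def)
    qed
    finally show "g t x \<le> g (Suc t) x" .
  next
    fix t assume t: "t \<in> {1..n}"
    have one: "1 \<in> {1..n}" using t by auto
    show "g t 0 = g 1 0" using g0[OF t] g0[OF one] mean[OF t] by simp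
  next
    fix t x assume t: "t \<in> {1..n}" and x: "0 \<le> (x::real)"
    have "g t 0 - x = integral\<^sup>L M (\<lambda>\<omega>. X t \<omega> - x)"
      using g0[OF t] intX[OF t] by (simp add: prob_space)
    also have "\<dots> \<le> g t x" unfolding g_def
      by (rule integral_mono) (use intX[OF t] inth[OF t] in auto)
    finally show "g t 0 - x \<le> g t x" .
  next
    fix t assume t: "t \<in> {1..n}"
    have "((\<lambda>x. integral\<^sup>L M (\<lambda>\<omega>. max (X t \<omega> - x) 0)) \<longlongrightarrow> integral\<^sup>L M (\<lambda>\<omega>. 0::real)) at_top"
    proof (rule integral_dominated_convergence_at_top[where w="\<lambda>\<omega>. \<bar>X t \<omega>\<bar>"])
      show "(\<lambda>\<omega>. 0::real) \<in> borel_measurable M" by simp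
      show "\<And>x. (\<lambda>\<omega>. max (X t \<omega> - x) 0) \<in> borel_measurable M" using meas[OF t] by measurable
      show "integrable M (\<lambda>\<omega>. \<bar>X t \<omega>\<bar>)" using intX[OF t] by auto
      show "AE \<omega> in M. ((\<lambda>x. max (X t \<omega> - x) 0) \<longlongrightarrow> 0) at_top"
      proof (rule AE_I2)
        fix \<omega>
        have "eventually (\<lambda>x. max (X t \<omega> - x) 0 = 0) at_top"
          using eventually_gt_at_top[of "X t \<omega>"] by eventually_elim simp
        then show "((\<lambda>x. max (X t \<omega> - x) 0) \<longlongrightarrow> 0) at_top" by (rule tendsto_eventually)
      qed
      show "\<forall>\<^sub>F x in at_top. AE \<omega> in M. norm (max (X t \<omega> - x) 0) \<le> \<bar>X t \<omega>\<bar>"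
        using eventually_ge_at_top[of "0::real"]
      proof eventually_elim
        case (elim x)
        show ?case by (rule AE_I2) (use elim in auto)
      qed
    qed
    then show "(g t \<longlongrightarrow> 0) at_top" by (simp add: g_def[abs_def])
  next
    fix t j assume t: "t \<in> {1..n}" and j: "j \<in> {1..U t}"
    show "g t (k t j) = C t j" unfolding g_def using calls t j by blast
  qed
qed

theorem proposition3:
  fixes n :: nat and U :: "nat \<Rightarrow> nat" and k C :: "nat \<Rightarrow> nat \<Rightarrow> real"
  assumes "\<forall>t\<in>{1..n}. \<forall>j\<in>{1..U t}. k t j \<ge> 0 \<and> C t j \<ge> 0"
  shows "(\<exists>(M :: (nat \<Rightarrow> real) measure) X.
            finite_martingale M X n \<and>
            (\<forall>t\<in>{1..n}. \<forall>\<omega>\<in>space M. X t \<omega> \<ge> 0) \<and>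
            (\<forall>t\<in>{1..n}. \<forall>j\<in>{1..U t}.
               integral\<^sup>L M (\<lambda>\<omega>. max (X t \<omega> - k t j) 0) = C t j))
     \<longleftrightarrow>
         (\<exists>g :: nat \<Rightarrow> real \<Rightarrow> real.
            (\<forall>t\<in>{1..n}. convex_on {0..} (g t)) \<and>
            (\<forall>t\<in>{1..n}. \<forall>x\<ge>0. g t x \<ge> 0) \<and>
            (\<forall>t\<in>{1..<n}. \<forall>x\<ge>0. g t x \<le> g (Suc t) x) \<and>
            (\<forall>t\<in>{1..n}.
               g t 0 = g 1 0 \<and>
               (\<forall>x\<ge>0. g t x \<ge> g t 0 - x) \<and>
               (g t \<longlongrightarrow> 0) at_top \<and>
               (\<forall>j\<in>{1..U t}. g t (k t j) = C t j)))"
proof (rule iffI)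
  assume "\<exists>(M :: (nat \<Rightarrow> real) measure) X.
            finite_martingale M X n \<and>
            (\<forall>t\<in>{1..n}. \<forall>\<omega>\<in>space M. X t \<omega> \<ge> 0) \<and>
            (\<forall>t\<in>{1..n}. \<forall>j\<in>{1..U t}.
               integral\<^sup>L M (\<lambda>\<omega>. max (X t \<omega> - k t j) 0) = C t j)"
  then obtain M :: "(nat \<Rightarrow> real) measure" and X where
    a: "finite_martingale M X n" and b: "\<forall>t\<in>{1..n}. \<forall>\<omega>\<in>space M. X t \<omega> \<ge> 0"
    and c: "\<forall>t\<in>{1..n}. \<forall>j\<in>{1..U t}. integral\<^sup>L M (\<lambda>\<omega>. max (X t \<omega> - k t j) 0) = C t j"
    by blast
  show "\<exists>g :: nat \<Rightarrow> real \<Rightarrow> real.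
            (\<forall>t\<in>{1..n}. convex_on {0..} (g t)) \<and>
            (\<forall>t\<in>{1..n}. \<forall>x\<ge>0. g t x \<ge> 0) \<and>
            (\<forall>t\<in>{1..<n}. \<forall>x\<ge>0. g t x \<le> g (Suc t) x) \<and>
            (\<forall>t\<in>{1..n}.
               g t 0 = g 1 0 \<and>
               (\<forall>x\<ge>0. g t x \<ge> g t 0 - x) \<and>
               (g t \<longlongrightarrow> 0) at_top \<and>
               (\<forall>j\<in>{1..U t}. g t (k t j) = C t j))"
    by (rule forward_dir[OF a b c])
next
  assume "\<exists>g :: nat \<Rightarrow> real \<Rightarrow> real.
            (\<forall>t\<in>{1..n}. convex_on {0..} (g t)) \<and>
            (\<forall>t\<in>{1..n}. \<forall>x\<ge>0. g t x \<ge> 0) \<and>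
            (\<forall>t\<in>{1..<n}. \<forall>x\<ge>0. g t x \<le> g (Suc t) x) \<and>
            (\<forall>t\<in>{1..n}.
               g t 0 = g 1 0 \<and>
               (\<forall>x\<ge>0. g t x \<ge> g t 0 - x) \<and>
               (g t \<longlongrightarrow> 0) at_top \<and>
               (\<forall>j\<in>{1..U t}. g t (k t j) = C t j))"
  then obtain g :: "nat \<Rightarrow> real \<Rightarrow> real" where
    a: "\<forall>t\<in>{1..n}. convex_on {0..} (g t)" and b: "\<forall>t\<in>{1..n}. \<forall>x\<ge>0. g t x \<ge> 0"
    and c: "\<forall>t\<in>{1..<n}. \<forall>x\<ge>0. g t x \<le> g (Suc t) x"
    and d: "\<forall>t\<in>{1..n}.
               g t 0 = g 1 0 \<and>
               (\<forall>x\<ge>0. g t x \<ge> g t 0 - x) \<and>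
               (g t \<longlongrightarrow> 0) at_top \<and>
               (\<forall>j\<in>{1..U t}. g t (k t j) = C t j)"
    by blast
  show "\<exists>(M :: (nat \<Rightarrow> real) measure) X.
            finite_martingale M X n \<and>
            (\<forall>t\<in>{1..n}. \<forall>\<omega>\<in>space M. X t \<omega> \<ge> 0) \<and>
            (\<forall>t\<in>{1..n}. \<forall>j\<in>{1..U t}.
               integral\<^sup>L M (\<lambda>\<omega>. max (X t \<omega> - k t j) 0) = C t j)"
    by (rule reverse_dir[OF assms a b c d])
qed

end
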